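(* The six $4\times4$ matrices $$U=|11\rangle\langle01|-|01\rangle\langle11|,\quad Y=i|11\rangle\langle01|+i|01\rangle\langle11|,$$ $$T=|11\rangle\langle10|-|10\rangle\langle11|,\quad X=i|11\rangle\langle10|+i|10\rangle\langle11|,$$ $$V=|10\rangle\langle00|-|00\rangle\langle10|,\quad Z=i|10\rangle\langle00|+i|00\rangle\langle10|$$ generate the Lie algebra $\mathfrak{su}(4)$ as a real Lie algebra under the commutator bracket. Consequently, the two-qubit gates $$\exp\!\big(-t(|1\delta\rangle\langle0\delta|-|0\delta\rangle\langle1\delta|)\big),\qquad \exp\!\big(-ti(|1\delta\rangle\langle0\delta|+|0\delta\rangle\langle1\delta|)\big),$$ for $\delta\in\{0,1\}$ and $-1\le t\le1$, applied to a pair of qubits in either order, form a universal set of two-qubit gates: every element of $SU(4)$ is a finite product of such gates.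
   Context: Two-qubit operators are $4\times4$ complex matrices in the basis $|00\rangle,|01\rangle,|10\rangle,|11\rangle$. $\mathfrak{su}(4)$ is the real Lie algebra of traceless anti-Hermitian $4\times4$ matrices. Applying a gate "in the other order" means conjugating it by the swap of the two qubits. *)

theory Defs
  imports "HOL-Analysis.Analysis"
begin

text \<open>Two-qubit operators: complex 4x4 matrices, index k :: 4 (values 0,1,2,3)
  corresponds to the basis ket |ab> with k = 2a + b, i.e. |00>,|01>,|10>,|11>.\<close>

type_synonym cmat4 = "complex^4^4"

definition ket_bra :: "4 \<Rightarrow> 4 \<Rightarrow> cmat4" where
  "ket_bra i j = (\<chi> r c. if r = i \<and> c = j then 1 else 0)"

text \<open>Basis index of |a b>.\<close>
definition qidx :: "nat \<Rightarrow> nat \<Rightarrow> 4" where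
  "qidx a b = of_nat (2 * a + b)"

definition cscale :: "complex \<Rightarrow> cmat4 \<Rightarrow> cmat4" where
  "cscale c A = (\<chi> i j. c * A$i$j)"

definition conj_transpose :: "cmat4 \<Rightarrow> cmat4" where
  "conj_transpose A = (\<chi> i j. cnj (A$j$i))"

definition commutator :: "cmat4 \<Rightarrow> cmat4 \<Rightarrow> cmat4" where
  "commutator A B = A ** B - B ** A"

text \<open>su(4): traceless anti-Hermitian 4x4 matrices (a real Lie algebra).\<close>
definition su4 :: "cmat4 set" where
  "su4 = {A. conj_transpose A = - A \<and> trace A = 0}"

text \<open>SU(4): unitary matrices with determinant 1.\<close>
definition SU4 :: "cmat4 set" where
  "SU4 = {A. A ** conj_transpose A = mat 1 \<and> det A = 1}"

text \<open>Real Lie algebra generated by S under the commutator bracket: the smallest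
  set containing S closed under real linear combinations and commutators.\<close>
inductive_set real_lie_gen :: "cmat4 set \<Rightarrow> cmat4 set" for S where
  gen: "x \<in> S \<Longrightarrow> x \<in> real_lie_gen S"
| zero: "0 \<in> real_lie_gen S"
| add: "x \<in> real_lie_gen S \<Longrightarrow> y \<in> real_lie_gen S \<Longrightarrow> x + y \<in> real_lie_gen S"
| scale: "x \<in> real_lie_gen S \<Longrightarrow> (r::real) *\<^sub>R x \<in> real_lie_gen S"
| bracket: "x \<in> real_lie_gen S \<Longrightarrow> y \<in> real_lie_gen S \<Longrightarrow> commutator x y \<in> real_lie_gen S"

text \<open>Matrix powers and the matrix exponential (entrywise power series).\<close>
primrec mpow :: "cmat4 \<Rightarrow> nat \<Rightarrow> cmat4" where
  "mpow A 0 = mat 1"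
| "mpow A (Suc n) = A ** mpow A n"

definition mexp :: "cmat4 \<Rightarrow> cmat4" where
  "mexp A = (\<chi> i j. \<Sum>n. (mpow A n)$i$j / of_nat (fact n))"

text \<open>Swap of the two qubits: |ab> \<mapsto> |ba>.\<close>
definition SWAP :: cmat4 where
  "SWAP = ket_bra 0 0 + ket_bra 1 2 + ket_bra 2 1 + ket_bra 3 3"

text \<open>The six generators.\<close>
definition gU :: cmat4 where "gU = ket_bra 3 1 - ket_bra 1 3"
definition gY :: cmat4 where "gY = cscale \<i> (ket_bra 3 1 + ket_bra 1 3)"
definition gT :: cmat4 where "gT = ket_bra 3 2 - ket_bra 2 3"
definition gX :: cmat4 where "gX = cscale \<i> (ket_bra 3 2 + ket_bra 2 3)"
definition gV :: cmat4 where "gV = ket_bra 2 0 - ket_bra 0 2"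
definition gZ :: cmat4 where "gZ = cscale \<i> (ket_bra 2 0 + ket_bra 0 2)"

text \<open>Basic gates exp(-t(|1d><0d| - |0d><1d|)) and exp(-t i(|1d><0d| + |0d><1d|)),
  d in {0,1}, -1 <= t <= 1, in the given qubit order.\<close>
definition basic_gates :: "cmat4 set" where
  "basic_gates = {mexp (- (t *\<^sub>R (ket_bra (qidx 1 d) (qidx 0 d) - ket_bra (qidx 0 d) (qidx 1 d))))
                   | t d. d \<in> {0,1} \<and> -1 \<le> t \<and> t \<le> 1}
               \<union> {mexp (- (t *\<^sub>R cscale \<i> (ket_bra (qidx 1 d) (qidx 0 d) + ket_bra (qidx 0 d) (qidx 1 d))))
                   | t d. d \<in> {0,1} \<and> -1 \<le> t \<and> t \<le> 1}"

text \<open>Gate set: basic gates applied in either qubit order (other order = conjugation by SWAP).\<close>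
definition gate_set :: "cmat4 set" where
  "gate_set = basic_gates \<union> {SWAP ** G ** SWAP | G. G \<in> basic_gates}"

end

theory Submission
  imports Defs
begin

(* ---- Pre ---- *)
lemma rep_neq: "Rep_bit0 (x::4) \<noteq> Rep_bit0 y \<Longrightarrow> x \<noteq> y" by auto

lemma n01: "(0::4) \<noteq> 1" by (rule rep_neq) (simp add: bit0.Rep_numeral bit0.Rep_0 bit0.Rep_1)
lemma n02: "(0::4) \<noteq> 2" by (rule rep_neq) (simp add: bit0.Rep_numeral bit0.Rep_0 bit0.Rep_1)
lemma n03: "(0::4) \<noteq> 3" by (rule rep_neq) (simp add: bit0.Rep_numeral bit0.Rep_0 bit0.Rep_1)
lemma n12: "(1::4) \<noteq> 2" by (rule rep_neq) (simp add: bit0.Rep_numeral bit0.Rep_0 bit0.Rep_1)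
lemma n13: "(1::4) \<noteq> 3" by (rule rep_neq) (simp add: bit0.Rep_numeral bit0.Rep_0 bit0.Rep_1)
lemma n23: "(2::4) \<noteq> 3" by (rule rep_neq) (simp add: bit0.Rep_numeral bit0.Rep_0 bit0.Rep_1)
lemma n40: "(4::4) = 0"
  by (rule iffD1[OF Rep_bit0_inject]) (simp add: bit0.Rep_numeral bit0.Rep_0)

lemmas nq [simp] = n01 n02 n03 n12 n13 n23 n01[symmetric] n02[symmetric] n03[symmetric]
  n12[symmetric] n13[symmetric] n23[symmetric]

lemma UNIV4: "(UNIV::4 set) = {0,1,2,3}"
proof -
  have "x \<in> {0,1,2,3}" for x :: 4 using exhaust_4[of x] unfolding n40 by blast
  then show ?thesis by blast
qed

lemma sum4: "sum f (UNIV::4 set) = f 0 + f 1 + f 2 + f 3"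
proof -
  have "sum f (UNIV::4 set) = f 1 + f 2 + f 3 + f 0" unfolding sum_4 n40 ..
  then show ?thesis by (simp only: ac_simps)
qed

lemma all4: "(\<forall>i::4. P i) \<longleftrightarrow> P 0 \<and> P 1 \<and> P 2 \<and> P 3"
proof
  assume a: "P 0 \<and> P 1 \<and> P 2 \<and> P 3"
  show "\<forall>i. P i"
  proof
    fix i :: 4
    have "i = 1 \<or> i = 2 \<or> i = 3 \<or> i = 0" using exhaust_4[of i] unfolding n40 .
    then show "P i" using a by (elim disjE) simp_all
  qed
qed simp


(* ---- P1 ---- *)
definition Rm :: "4 \<Rightarrow> 4 \<Rightarrow> cmat4" where "Rm i j = ket_bra j i - ket_bra i j"
definition Sm :: "4 \<Rightarrow> 4 \<Rightarrow> cmat4" where "Sm i j = cscale \<i> (ket_bra j i + ket_bra i j)"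
definition Dm :: "4 \<Rightarrow> 4 \<Rightarrow> cmat4" where "Dm i j = cscale \<i> (ket_bra i i - ket_bra j j)"

lemmas msimps = vec_eq_iff all4 sum4 matrix_matrix_mult_def commutator_def ket_bra_def cscale_def
  Rm_def Sm_def Dm_def gU_def gY_def gT_def gX_def gV_def gZ_def

lemma c1: "Rm 0 3 = commutator gT gV" by (simp add: msimps)
lemma c2: "Sm 0 3 = commutator gT gZ" by (simp add: msimps)
lemma c3: "Rm 1 2 = commutator gU gT" by (simp add: msimps)
lemma c4: "Sm 1 2 = (-1::real) *\<^sub>R commutator gU gX" by (simp add: msimps)
lemma c5: "Dm 1 2 = (-1/2::real) *\<^sub>R commutator (Rm 1 2) (Sm 1 2)" by (simp add: msimps)
lemma c6: "Dm 2 3 = (-1/2::real) *\<^sub>R commutator gT gX" by (simp add: msimps)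
lemma c7: "Rm 0 1 = (-1::real) *\<^sub>R commutator gU (Rm 0 3)" by (simp add: msimps)
lemma c8: "Sm 0 1 = (-1::real) *\<^sub>R commutator gU (Sm 0 3)" by (simp add: msimps)
lemma c9: "Dm 0 1 = (-1/2::real) *\<^sub>R commutator (Rm 0 1) (Sm 0 1)" by (simp add: msimps)

(* ---- P1b ---- *)
lemma ct_add: "conj_transpose (A + B) = conj_transpose A + conj_transpose B"
  by (simp add: vec_eq_iff conj_transpose_def)
lemma ct_scale: "conj_transpose (r *\<^sub>R A) = r *\<^sub>R conj_transpose A"
  by (simp add: vec_eq_iff conj_transpose_def)
lemma ct_mult: "conj_transpose (A ** B) = conj_transpose B ** conj_transpose A"
  by (simp add: vec_eq_iff conj_transpose_def matrix_matrix_mult_def mult.commute)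
lemma ct_minus: "conj_transpose (A - B) = conj_transpose A - conj_transpose B"
  by (simp add: vec_eq_iff conj_transpose_def)
lemma trace_scale: "trace (r *\<^sub>R (A::cmat4)) = r *\<^sub>R trace A"
  by (simp add: trace_def scaleR_sum_right)

lemma su4_sub: "real_lie_gen {gU, gY, gT, gX, gV, gZ} \<subseteq> su4"
proof
  fix x assume "x \<in> real_lie_gen {gU, gY, gT, gX, gV, gZ}"
  then show "x \<in> su4"
  proof induction
    case (gen x)
    then show ?case
      by (auto simp: msimps su4_def conj_transpose_def trace_def)
  next
    case zero
    then show ?case by (simp add: su4_def vec_eq_iff conj_transpose_def trace_def)
  next
    case (add x y)
    then show ?case by (simp add: su4_def ct_add trace_add)
  next
    case (scale x r)
    then show ?case by (simp add: su4_def ct_scale trace_scale)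
  next
    case (bracket x y)
    have n: "\<And>B C :: cmat4. (- B) ** (- C) = B ** C"
      by (simp add: vec_eq_iff matrix_matrix_mult_def sum_negf[symmetric])
    have c1: "conj_transpose (commutator x y) = - commutator x y"
      using bracket by (simp add: su4_def commutator_def ct_minus ct_mult n)
    have c2: "trace (commutator x y) = 0"
      unfolding commutator_def trace_sub using trace_mul_sym[of x y] by simp
    show ?case using c1 c2 by (simp add: su4_def)
  qed
qed

lemma L_add: "x \<in> real_lie_gen S \<Longrightarrow> y \<in> real_lie_gen S \<Longrightarrow> x + y \<in> real_lie_gen S"
  by (rule real_lie_gen.add)

lemma su4_sup: "su4 \<subseteq> real_lie_gen {gU, gY, gT, gX, gV, gZ}"
proof
  let ?L = "real_lie_gen {gU, gY, gT, gX, gV, gZ}"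
  have g: "gU \<in> ?L" "gY \<in> ?L" "gT \<in> ?L" "gX \<in> ?L" "gV \<in> ?L" "gZ \<in> ?L"
    by (auto intro: real_lie_gen.gen)
  have br: "\<And>x y. x \<in> ?L \<Longrightarrow> y \<in> ?L \<Longrightarrow> commutator x y \<in> ?L" by (rule real_lie_gen.bracket)
  have scl: "\<And>x r. x \<in> ?L \<Longrightarrow> (r::real) *\<^sub>R x \<in> ?L" by (rule real_lie_gen.scale)
  have R03: "Rm 0 3 \<in> ?L" unfolding c1 using g br by blast
  have S03: "Sm 0 3 \<in> ?L" unfolding c2 using g br by blast
  have R12: "Rm 1 2 \<in> ?L" unfolding c3 using g br by blast
  have S12: "Sm 1 2 \<in> ?L" unfolding c4 using g br scl by blast
  have D12: "Dm 1 2 \<in> ?L" unfolding c5 using R12 S12 br scl by blast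
  have D23: "Dm 2 3 \<in> ?L" unfolding c6 using g br scl by blast
  have R01: "Rm 0 1 \<in> ?L" unfolding c7 using g R03 br scl by blast
  have S01: "Sm 0 1 \<in> ?L" unfolding c8 using g S03 br scl by blast
  have D01: "Dm 0 1 \<in> ?L" unfolding c9 using R01 S01 br scl by blast
  have R13: "Rm 1 3 \<in> ?L" "Sm 1 3 \<in> ?L" "Rm 2 3 \<in> ?L" "Sm 2 3 \<in> ?L" "Rm 0 2 \<in> ?L" "Sm 0 2 \<in> ?L"
    using g by (simp_all add: Rm_def Sm_def gU_def gY_def gT_def gX_def gV_def gZ_def)
  fix A assume "A \<in> su4"
  then have ct: "conj_transpose A = - A" and tr: "trace A = 0" by (auto simp: su4_def)
  have e: "A$i$j = - cnj (A$j$i)" for i j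
  proof -
    have "conj_transpose A $ j $ i = (- A) $ j $ i" using ct by simp
    then have "cnj (A$i$j) = - A$j$i" by (simp add: conj_transpose_def)
    then show ?thesis by (metis complex_cnj_cnj complex_cnj_minus)
  qed
  have d: "Re (A$k$k) = 0" for k using e[of k k] by (metis add.inverse_neutral cnj.sel(1) eq_neg_iff_add_eq_0 uminus_complex.sel(1) add_eq_0_iff2 mult_2 mult_eq_0_iff zero_neq_numeral)
  have t3: "A$3$3 = - (A$0$0 + A$1$1 + A$2$2)" 
  proof -
    have "A$0$0 + A$1$1 + A$2$2 + A$3$3 = 0" using tr by (simp add: trace_def sum4)
    then show ?thesis by (simp add: algebra_simps eq_neg_iff_add_eq_0)
  qed
  note ee = e[of 1 0] e[of 2 0] e[of 3 0] e[of 2 1] e[of 3 1] e[of 3 2]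
  define h0 where "h0 = Im (A$0$0)"
  define h1 where "h1 = Im (A$1$1)"
  define h2 where "h2 = Im (A$2$2)"
  define C where "C = (- Re (A$0$1)) *\<^sub>R Rm 0 1 + Im (A$0$1) *\<^sub>R Sm 0 1
     + (- Re (A$0$2)) *\<^sub>R Rm 0 2 + Im (A$0$2) *\<^sub>R Sm 0 2
     + (- Re (A$0$3)) *\<^sub>R Rm 0 3 + Im (A$0$3) *\<^sub>R Sm 0 3
     + (- Re (A$1$2)) *\<^sub>R Rm 1 2 + Im (A$1$2) *\<^sub>R Sm 1 2
     + (- Re (A$1$3)) *\<^sub>R Rm 1 3 + Im (A$1$3) *\<^sub>R Sm 1 3
     + (- Re (A$2$3)) *\<^sub>R Rm 2 3 + Im (A$2$3) *\<^sub>R Sm 2 3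
     + h0 *\<^sub>R Dm 0 1 + (h0 + h1) *\<^sub>R Dm 1 2 + (h0 + h1 + h2) *\<^sub>R Dm 2 3"
  have "C \<in> ?L" unfolding C_def
    by (intro real_lie_gen.add real_lie_gen.scale R03 S03 R12 S12 D12 D23 R01 S01 D01 R13)
  moreover have "A = C"
    using d[of 0] d[of 1] d[of 2]
    by (simp add: vec_eq_iff all4 C_def Rm_def Sm_def Dm_def ket_bra_def cscale_def
        complex_eq_iff ee t3 h0_def h1_def h2_def)
  ultimately show "A \<in> ?L" by simp
qed

theorem part1: "real_lie_gen {gU, gY, gT, gX, gV, gZ} = su4"
  using su4_sub su4_sup by blast

(* ---- P2 ---- *)
definition Eg :: "4 \<Rightarrow> 4 \<Rightarrow> complex \<Rightarrow> complex \<Rightarrow> cmat4" where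
 "Eg p q a b = (\<chi> i j. if i = p \<and> j = p then a else if i = p \<and> j = q then - cnj b
     else if i = q \<and> j = p then b else if i = q \<and> j = q then cnj a else if i = j then 1 else 0)"

lemma mat_eqI: "(\<And>i j. (A::cmat4)$i$j = B$i$j) \<Longrightarrow> A = B"
  by (simp add: vec_eq_iff)

lemma sum_two:
  fixes f :: "4 \<Rightarrow> complex"
  assumes "p \<noteq> q"
  shows "(\<Sum>k\<in>UNIV. f k * (if k = p then a else if k = q then b else 0)) = f p * a + f q * b"
proof -
  have "(\<Sum>k\<in>UNIV. f k * (if k = p then a else if k = q then b else 0)) =
        (\<Sum>k\<in>UNIV. (if k = p then f p * a else 0) + (if k = q then f q * b else 0))"
    by (rule sum.cong) (use assms in auto)
  also have "\<dots> = f p * a + f q * b" by (simp add: sum.distrib)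
  finally show ?thesis .
qed

lemma mult_Eg:
  assumes "p \<noteq> q"
  shows "(A ** Eg p q a b)$i$j = (if j = p then A$i$p * a + A$i$q * b
     else if j = q then A$i$q * cnj a - A$i$p * cnj b else A$i$j)"
proof -
  have m: "(A ** Eg p q a b)$i$j = (\<Sum>k\<in>UNIV. A$i$k * Eg p q a b $k$j)"
    by (simp add: matrix_matrix_mult_def)
  consider "j = p" | "j = q" | "j \<noteq> p \<and> j \<noteq> q" by blast
  then show ?thesis
  proof cases
    case 1
    have "(A ** Eg p q a b)$i$j = (\<Sum>k\<in>UNIV. A$i$k * (if k = p then a else if k = q then b else 0))"
      unfolding m using 1 assms by (intro sum.cong) (auto simp: Eg_def)
    then show ?thesis using 1 assms sum_two by simp
  next
    case 2
    have "(A ** Eg p q a b)$i$j = (\<Sum>k\<in>UNIV. A$i$k * (if k = q then cnj a else if k = p then - cnj b else 0))"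
      unfolding m using 2 assms by (intro sum.cong) (auto simp: Eg_def)
    then show ?thesis using 2 assms sum_two[of q p] by simp
  next
    case 3
    have "(A ** Eg p q a b)$i$j = (\<Sum>k\<in>UNIV. if k = j then A$i$k else 0)"
      unfolding m using 3 by (intro sum.cong) (auto simp: Eg_def)
    then show ?thesis using 3 by simp
  qed
qed

lemma Eg_mult:
  assumes "p \<noteq> q"
  shows "Eg p q a b ** Eg p q c d = Eg p q (a*c - cnj b * d) (b*c + cnj a * d)"
proof (rule mat_eqI)
  fix i j
  show "(Eg p q a b ** Eg p q c d) $ i $ j = Eg p q (a*c - cnj b * d) (b*c + cnj a * d) $ i $ j"
    unfolding mult_Eg[OF assms] using assms
    by (cases "i = p"; cases "i = q"; cases "j = p"; cases "j = q") (simp_all add: Eg_def algebra_simps)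
qed

lemma ct_Eg: "conj_transpose (Eg p q a b) = Eg p q (cnj a) (-b)" (is "?lhs = ?rhs")
proof (rule mat_eqI)
  fix i j
  show "?lhs $ i $ j = ?rhs $ i $ j"
    by (cases "i = p"; cases "i = q"; cases "j = p"; cases "j = q") (simp_all add: conj_transpose_def Eg_def)
qed

lemma Eg_one: "Eg p q 1 0 = mat 1" (is "?lhs = ?rhs")
proof (rule mat_eqI)
  fix i j
  show "?lhs $ i $ j = ?rhs $ i $ j"
    by (cases "i = p"; cases "i = q"; cases "j = p"; cases "j = q") (simp_all add: mat_def Eg_def)
qed

lemma Eg_swap:
  assumes "p \<noteq> q" shows "Eg q p a b = Eg p q (cnj a) (- cnj b)" (is "?lhs = ?rhs")
proof (rule mat_eqI)
  fix i j
  show "?lhs $ i $ j = ?rhs $ i $ j" using assms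
    by (cases "i = p"; cases "i = q"; cases "j = p"; cases "j = q") (simp_all add: Eg_def)
qed

lemma norm1: "cmod a ^ 2 + cmod b ^ 2 = 1 \<Longrightarrow> a * cnj a + b * cnj b = 1"
  by (metis complex_norm_square of_real_1 of_real_add)

lemma Eg_inv:
  assumes "p \<noteq> q" "cmod a ^ 2 + cmod b ^ 2 = 1"
  shows "Eg p q a b ** Eg p q (cnj a) (-b) = mat 1"
proof -
  have h1: "a * cnj a - cnj b * - b = 1" using norm1[OF assms(2)] by (simp add: algebra_simps)
  have h2: "b * cnj a + cnj a * - b = 0" by simp
  have "Eg p q a b ** Eg p q (cnj a) (-b) = Eg p q 1 0"
    unfolding Eg_mult[OF assms(1), of a b "cnj a" "-b"] h1 h2 by (rule refl)
  then show ?thesis by (simp add: Eg_one)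
qed

lemma det_Eg_nz:
  assumes pq: "p \<noteq> q" and a: "a \<noteq> 0" and n: "cmod a ^ 2 + cmod b ^ 2 = 1"
  shows "det (Eg p q a b) = 1"
proof -
  let ?E = "Eg p q a b"
  define M :: cmat4 where "M = (\<chi> i j. if i = q then (if j = q then 1/a else 0) else ?E$i$j)"
  have n': "a * cnj a + b * cnj b = 1" by (rule norm1[OF n])
  have "M = (\<chi> k. if k = q then row q ?E + (-b/a) *s row p ?E else row k ?E)"
  proof -
    have k0: "cnj a + b * cnj b / a = 1 / a" using n' a by (simp add: field_simps)
    have k1: "cnj a + - b / a * - cnj b = 1 / a" using k0 by simp
    have k2: "b + - b / a * a = 0" using a by simp
    have "M$i$j = (\<chi> k. if k = q then row q ?E + (-b/a) *s row p ?E else row k ?E)$i$j" for i j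
    proof (cases "i = q")
      case True
      consider "j = p" | "j = q" | "j \<noteq> p \<and> j \<noteq> q" by blast
      then show ?thesis
      proof cases
        case 1 then show ?thesis using True pq k2 by (simp add: M_def row_def Eg_def)
      next
        case 2 then show ?thesis using True pq k1 by (simp add: M_def row_def Eg_def)
      next
        case 3 then have "j \<noteq> p" "j \<noteq> q" by auto
        then show ?thesis using True pq by (simp add: M_def row_def Eg_def)
      qed
    next
      case False then show ?thesis by (simp add: M_def row_def)
    qed
    then show ?thesis by (simp add: vec_eq_iff)
  qed
  then have dM: "det M = det ?E" using det_row_operation[OF pq[symmetric]] by simp
  have diag: "\<And>i. M$i$i = (if i = p then a else 1) * (if i = q then 1/a else 1)"
    using pq by (auto simp: M_def Eg_def)
  have pr: "prod (\<lambda>i. M$i$i) UNIV = 1"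
    unfolding diag prod.distrib using a by simp
  have "det M = 1"
  proof (cases "p < q")
    case True
    have "det M = prod (\<lambda>i. M$i$i) UNIV"
      by (rule det_upperdiagonal) (use True pq in \<open>auto simp: M_def Eg_def\<close>)
    then show ?thesis using pr by simp
  next
    case False
    then have "q < p" using pq by simp
    have "det M = prod (\<lambda>i. M$i$i) UNIV"
      by (rule det_lowerdiagonal) (use \<open>q < p\<close> pq in \<open>auto simp: M_def Eg_def\<close>)
    then show ?thesis using pr by simp
  qed
  then show ?thesis using dM by simp
qed

lemma det_Eg:
  assumes pq: "p \<noteq> q" and n: "cmod a ^ 2 + cmod b ^ 2 = 1"
  shows "det (Eg p q a b) = 1"
proof (cases "a = 0")
  case False show ?thesis by (rule det_Eg_nz[OF pq False n])
next
  case True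
  then have b: "cnj b * b = 1" using norm1[OF n] by (simp add: mult.commute)
  define h :: complex where "h = of_real (1 / sqrt 2)"
  have r: "(1/sqrt 2) * (1/sqrt 2) = (1/2::real)" by simp
  have r2: "(1/sqrt 2) ^ 2 = (1/2::real)" using r by (simp add: power2_eq_square)
  have hh: "h * h = 1/2" "cnj h = h"
    unfolding h_def by (metis r of_real_mult of_real_divide of_real_1 of_real_numeral, simp)
  have ch: "cmod h = 1/sqrt 2" unfolding h_def norm_of_real by simp
  have nh: "cmod h ^ 2 + cmod (b * h) ^ 2 = 1"
  proof -
    have "cmod b ^ 2 = 1" using n True by simp
    then have "cmod b = 1" using power2_eq_1_iff[of "cmod b"] norm_ge_zero[of b] by auto
    then show ?thesis by (simp add: ch norm_mult power_mult_distrib r2)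
  qed
  have eq: "Eg p q h (b*h) ** Eg p q h (b*h) = Eg p q a b"
  proof -
    have e1: "h * h - cnj (b * h) * (b * h) = 0"
    proof -
      have "cnj (b * h) * (b * h) = (cnj b * b) * (h * h)" using hh by (simp add: algebra_simps)
      then show ?thesis using hh b by simp
    qed
    have e2: "b * h * h + cnj h * (b * h) = b" using hh by (simp add: algebra_simps)
    show ?thesis unfolding Eg_mult[OF pq] e1 e2 True by (rule refl)
  qed
  have "h \<noteq> 0" by (simp add: h_def)
  then have d1: "det (Eg p q h (b*h)) = 1" by (rule det_Eg_nz[OF pq _ nh])
  have "det (Eg p q a b) = det (Eg p q h (b*h)) * det (Eg p q h (b*h))"
    unfolding eq[symmetric] by (rule det_mul)
  then show ?thesis using d1 by simp
qed

(* ---- P3 ---- *)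
definition Kw :: "4 \<Rightarrow> 4 \<Rightarrow> complex \<Rightarrow> cmat4" where
  "Kw p q z = (\<chi> i j. if i = q \<and> j = p then z else if i = p \<and> j = q then - cnj z else 0)"

lemma Kw_mult:
  assumes pq: "p \<noteq> q"
  shows "(Kw p q z ** P)$i$j = (if i = q then z * P$p$j else if i = p then - cnj z * P$q$j else 0)"
proof -
  have m: "(Kw p q z ** P)$i$j = (\<Sum>k\<in>UNIV. Kw p q z $i$k * P$k$j)"
    by (simp add: matrix_matrix_mult_def)
  show ?thesis
  proof (cases "i = q")
    case True
    have "(Kw p q z ** P)$i$j = (\<Sum>k\<in>UNIV. if k = p then z * P$p$j else 0)"
      unfolding m using True pq by (intro sum.cong) (auto simp: Kw_def)
    then show ?thesis using True by simp
  next
    case F1: False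
    show ?thesis
    proof (cases "i = p")
      case True
      have "(Kw p q z ** P)$i$j = (\<Sum>k\<in>UNIV. if k = q then - cnj z * P$q$j else 0)"
        unfolding m using True pq by (intro sum.cong) (auto simp: Kw_def)
      then show ?thesis using True F1 by simp
    next
      case False
      have "(Kw p q z ** P)$i$j = (\<Sum>k::4\<in>UNIV. 0::complex)"
        unfolding m using False F1 by (intro sum.cong) (auto simp: Kw_def)
      then show ?thesis using False F1 by simp
    qed
  qed
qed

definition cc :: "nat \<Rightarrow> real" where "cc n = Re (\<i> ^ n)"
definition ss :: "nat \<Rightarrow> real" where "ss n = Im (\<i> ^ n)"

lemma cc_Suc: "cc (Suc n) = - ss n" by (simp add: cc_def ss_def)
lemma ss_Suc: "ss (Suc n) = cc n" by (simp add: cc_def ss_def)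
lemma cc0: "cc 0 = 1" and ss0: "ss 0 = 0" by (simp_all add: cc_def ss_def)

lemma mpow_Kw:
  assumes pq: "p \<noteq> q" and w: "w = 1 \<or> w = \<i>"
  shows "mpow (Kw p q (of_real s * w)) n $ i $ j =
    (if (i = p \<and> j = p) \<or> (i = q \<and> j = q) then of_real (s^n * cc n)
     else if i = q \<and> j = p then w * of_real (s^n * ss n)
     else if i = p \<and> j = q then - cnj w * of_real (s^n * ss n)
     else if i = j \<and> n = 0 then 1 else 0)"
proof (induction n arbitrary: i j)
  case 0
  show ?case using pq
    by (cases "i = p"; cases "i = q"; cases "j = p"; cases "j = q") (simp_all add: mat_def cc0 ss0)
next
  case (Suc n)
  have m: "mpow (Kw p q (of_real s * w)) (Suc n) $ i $ j =
     (if i = q then (of_real s * w) * mpow (Kw p q (of_real s * w)) n $p$j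
      else if i = p then - cnj (of_real s * w) * mpow (Kw p q (of_real s * w)) n $ q $ j else 0)"
    by (simp add: Kw_mult[OF pq])
  show ?case
    unfolding m Suc.IH using pq w
    by (cases "i = p"; cases "i = q"; cases "j = p"; cases "j = q"; elim disjE)
       (simp_all add: cc_Suc ss_Suc algebra_simps)
qed

lemma sums_cc: "(\<lambda>n. complex_of_real (s^n * cc n) / of_nat (fact n)) sums complex_of_real (cos s)"
proof -
  have "(\<lambda>n. (\<i> * of_real s)^n /\<^sub>R fact n) sums exp (\<i> * of_real s)" by (rule exp_converges)
  then have "(\<lambda>n. Re ((\<i> * of_real s)^n /\<^sub>R fact n)) sums Re (exp (\<i> * of_real s))" by (rule sums_Re)
  moreover have "Re (exp (\<i> * of_real s)) = cos s" by (simp add: Re_exp)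
  moreover have "Re ((\<i> * of_real s)^n /\<^sub>R fact n) = s^n * cc n / fact n" for n
    by (simp add: cc_def power_mult_distrib field_simps)
  ultimately have "(\<lambda>n. s^n * cc n / fact n) sums cos s" by simp
  then have "(\<lambda>n. complex_of_real (s^n * cc n / fact n)) sums complex_of_real (cos s)"
    by (rule sums_of_real)
  then show ?thesis by simp
qed

lemma sums_ss: "(\<lambda>n. complex_of_real (s^n * ss n) / of_nat (fact n)) sums complex_of_real (sin s)"
proof -
  have "(\<lambda>n. (\<i> * of_real s)^n /\<^sub>R fact n) sums exp (\<i> * of_real s)" by (rule exp_converges)
  then have "(\<lambda>n. Im ((\<i> * of_real s)^n /\<^sub>R fact n)) sums Im (exp (\<i> * of_real s))" by (rule sums_Im)
  moreover have "Im (exp (\<i> * of_real s)) = sin s" by (simp add: Im_exp)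
  moreover have "Im ((\<i> * of_real s)^n /\<^sub>R fact n) = s^n * ss n / fact n" for n
    by (simp add: ss_def power_mult_distrib field_simps)
  ultimately have "(\<lambda>n. s^n * ss n / fact n) sums sin s" by simp
  then have "(\<lambda>n. complex_of_real (s^n * ss n / fact n)) sums complex_of_real (sin s)"
    by (rule sums_of_real)
  then show ?thesis by simp
qed

lemma mexp_Kw:
  assumes pq: "p \<noteq> q" and w: "w = 1 \<or> w = \<i>"
  shows "mexp (Kw p q (of_real s * w)) = Eg p q (of_real (cos s)) (w * of_real (sin s))"
proof (rule mat_eqI)
  fix i j
  define f where "f n = mpow (Kw p q (of_real s * w)) n $ i $ j / of_nat (fact n)" for n
  have fe: "f = (\<lambda>n. mpow (Kw p q (of_real s * w)) n $ i $ j / of_nat (fact n))"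
    by (simp add: fun_eq_iff f_def)
  have e: "mexp (Kw p q (of_real s * w)) $ i $ j = suminf f" unfolding fe by (simp add: mexp_def)
  have "f sums (Eg p q (of_real (cos s)) (w * of_real (sin s)) $ i $ j)"
  proof -
    consider "(i = p \<and> j = p) \<or> (i = q \<and> j = q)" | "i = q \<and> j = p" | "i = p \<and> j = q"
      | "i = j" "i \<noteq> p" "i \<noteq> q"
      | "i \<noteq> j" "\<not> (i = q \<and> j = p)" "\<not> (i = p \<and> j = q)"
      by blast
    then show ?thesis
    proof cases
      case 1
      then have "f = (\<lambda>n. complex_of_real (s^n * cc n) / of_nat (fact n))"
        by (intro ext) (simp add: f_def mpow_Kw[OF pq w])
      moreover have "Eg p q (of_real (cos s)) (w * of_real (sin s)) $ i $ j = of_real (cos s)"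
        using 1 pq by (elim disjE) (simp_all add: Eg_def)
      ultimately show ?thesis using sums_cc by simp
    next
      case 2
      then have "f = (\<lambda>n. w * (complex_of_real (s^n * ss n) / of_nat (fact n)))"
        using pq by (intro ext) (simp add: f_def mpow_Kw[OF pq w])
      moreover have "Eg p q (of_real (cos s)) (w * of_real (sin s)) $ i $ j = w * of_real (sin s)"
        using 2 pq by (simp add: Eg_def)
      ultimately show ?thesis using sums_mult[OF sums_ss] by simp
    next
      case 3
      then have "f = (\<lambda>n. - cnj w * (complex_of_real (s^n * ss n) / of_nat (fact n)))"
        using pq by (intro ext) (simp add: f_def mpow_Kw[OF pq w])
      moreover have "Eg p q (of_real (cos s)) (w * of_real (sin s)) $ i $ j = - cnj w * of_real (sin s)"
        using 3 pq by (simp add: Eg_def)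
      ultimately show ?thesis using sums_mult[OF sums_ss[of s], of "- cnj w"] by simp
    next
      case 4
      then have "f = (\<lambda>n. if n = 0 then 1 else 0)"
        by (intro ext) (simp add: f_def mpow_Kw[OF pq w])
      moreover have "Eg p q (of_real (cos s)) (w * of_real (sin s)) $ i $ j = 1"
        using 4 by (simp add: Eg_def)
      moreover have "(\<lambda>n::nat. if n = 0 then 1 else (0::complex)) sums 1"
        using sums_single[of 0 "\<lambda>_. 1::complex"] by simp
      ultimately show ?thesis by (simp only:)
    next
      case 5
      then have "f = (\<lambda>n. 0)" using pq
        by (intro ext) (cases "i = p"; cases "j = p"; cases "i = q"; cases "j = q"; simp add: f_def mpow_Kw[OF pq w])
      moreover have "Eg p q (of_real (cos s)) (w * of_real (sin s)) $ i $ j = 0"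
        using 5 by (cases "i = p"; cases "j = p"; cases "i = q"; cases "j = q") (simp_all add: Eg_def)
      ultimately show ?thesis by simp
    qed
  qed
  then show "mexp (Kw p q (of_real s * w)) $ i $ j = Eg p q (of_real (cos s)) (w * of_real (sin s)) $ i $ j"
    unfolding e by (metis sums_unique)
qed

(* ---- P4 ---- *)
definition Yg :: "4 \<Rightarrow> 4 \<Rightarrow> real \<Rightarrow> cmat4" where
  "Yg p q t = Eg p q (of_real (cos t)) (- of_real (sin t))"
definition Xg :: "4 \<Rightarrow> 4 \<Rightarrow> real \<Rightarrow> cmat4" where
  "Xg p q t = Eg p q (of_real (cos t)) (- \<i> * of_real (sin t))"

lemma gateY:
  assumes pq: "p \<noteq> q"
  shows "mexp (- (t *\<^sub>R (ket_bra q p - ket_bra p q))) = Yg p q t"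
proof -
  have "- (t *\<^sub>R (ket_bra q p - ket_bra p q)) = Kw p q (of_real (-t) * 1)" (is "?l = ?r")
  proof (rule mat_eqI)
    fix i j
    show "?l $ i $ j = ?r $ i $ j" using pq
      by (cases "i = p"; cases "i = q"; cases "j = p"; cases "j = q")
         (simp_all add: Kw_def ket_bra_def scaleR_conv_of_real[where 'a=complex])
  qed
  then show ?thesis using mexp_Kw[OF pq, of 1 "-t"] by (simp add: Yg_def)
qed

lemma gateX:
  assumes pq: "p \<noteq> q"
  shows "mexp (- (t *\<^sub>R cscale \<i> (ket_bra q p + ket_bra p q))) = Xg p q t"
proof -
  have "- (t *\<^sub>R cscale \<i> (ket_bra q p + ket_bra p q)) = Kw p q (of_real (-t) * \<i>)" (is "?l = ?r")
  proof (rule mat_eqI)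
    fix i j
    show "?l $ i $ j = ?r $ i $ j" using pq
      by (cases "i = p"; cases "i = q"; cases "j = p"; cases "j = q")
         (simp_all add: Kw_def ket_bra_def cscale_def scaleR_conv_of_real[where 'a=complex])
  qed
  then show ?thesis using mexp_Kw[OF pq, of \<i> "-t"] by (simp add: Xg_def)
qed

lemma q00: "qidx 0 0 = 0" and q10: "qidx 1 0 = 2" and q01: "qidx 0 1 = 1" and q11: "qidx 1 1 = 3"
  by (simp_all add: qidx_def)

lemma Y_basic:
  assumes "(p,q) \<in> {(0,2),(1,3)}" "\<bar>t\<bar> \<le> 1"
  shows "Yg p q t \<in> basic_gates"
proof -
  have "\<exists>d::nat. d \<in> {0,1} \<and> p = qidx 0 d \<and> q = qidx 1 d"
  proof -
    consider "p = 0" "q = 2" | "p = 1" "q = 3" using assms(1) by auto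
    then show ?thesis
    proof cases
      case 1 then show ?thesis by (intro exI[of _ 0]) (simp add: qidx_def)
    next
      case 2 then show ?thesis by (intro exI[of _ 1]) (simp add: qidx_def)
    qed
  qed
  then obtain d :: nat where d: "d \<in> {0,1}" "p = qidx 0 d" "q = qidx 1 d" by blast
  have pq: "p \<noteq> q" using assms(1) by auto
  have "mexp (- (t *\<^sub>R (ket_bra (qidx 1 d) (qidx 0 d) - ket_bra (qidx 0 d) (qidx 1 d)))) \<in> basic_gates"
    unfolding basic_gates_def using d(1) assms(2)
    by (intro UnI1 CollectI exI[of _ t] exI[of _ d] conjI refl) (auto simp: abs_le_iff)
  then show ?thesis using gateY[OF pq] d by simp
qed

lemma X_basic:
  assumes "(p,q) \<in> {(0,2),(1,3)}" "\<bar>t\<bar> \<le> 1"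
  shows "Xg p q t \<in> basic_gates"
proof -
  have "\<exists>d::nat. d \<in> {0,1} \<and> p = qidx 0 d \<and> q = qidx 1 d"
  proof -
    consider "p = 0" "q = 2" | "p = 1" "q = 3" using assms(1) by auto
    then show ?thesis
    proof cases
      case 1 then show ?thesis by (intro exI[of _ 0]) (simp add: qidx_def)
    next
      case 2 then show ?thesis by (intro exI[of _ 1]) (simp add: qidx_def)
    qed
  qed
  then obtain d :: nat where d: "d \<in> {0,1}" "p = qidx 0 d" "q = qidx 1 d" by blast
  have pq: "p \<noteq> q" using assms(1) by auto
  have "mexp (- (t *\<^sub>R cscale \<i> (ket_bra (qidx 1 d) (qidx 0 d) + ket_bra (qidx 0 d) (qidx 1 d)))) \<in> basic_gates"
    unfolding basic_gates_def using d(1) assms(2)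
    by (intro UnI2 CollectI exI[of _ t] exI[of _ d] conjI refl) (auto simp: abs_le_iff)
  then show ?thesis using gateX[OF pq] d by simp
qed

definition inS :: "cmat4 set \<Rightarrow> cmat4 \<Rightarrow> bool" where
  "inS S A \<longleftrightarrow> (\<exists>gs. set gs \<subseteq> S \<and> A = foldr (**) gs (mat 1))"

lemma foldr_app: "foldr (**) (gs @ hs) (mat 1) = foldr (**) gs (mat 1) ** foldr (**) hs (mat 1)"
  by (induction gs) (simp_all add: matrix_mul_assoc)

lemma inS_one: "inS S (mat 1)" unfolding inS_def by (rule exI[of _ "[]"]) simp
lemma inS_gate: "g \<in> S \<Longrightarrow> inS S g" unfolding inS_def by (rule exI[of _ "[g]"]) simp
lemma inS_mult: "inS S A \<Longrightarrow> inS S B \<Longrightarrow> inS S (A ** B)"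
  unfolding inS_def by (metis foldr_app set_append Un_subset_iff)
lemma inS_mono: "S \<subseteq> T \<Longrightarrow> inS S A \<Longrightarrow> inS T A"
  unfolding inS_def by blast

lemma Y_add: "p \<noteq> q \<Longrightarrow> Yg p q s ** Yg p q t = Yg p q (s + t)"
  by (simp add: Yg_def Eg_mult cos_add sin_add algebra_simps)
lemma X_add: "p \<noteq> q \<Longrightarrow> Xg p q s ** Xg p q t = Xg p q (s + t)"
  by (simp add: Xg_def Eg_mult cos_add sin_add algebra_simps)

lemma Y_all:
  assumes P: "(p,q) \<in> {(0,2),(1,3)}"
  shows "inS basic_gates (Yg p q t)"
proof -
  have pq: "p \<noteq> q" using P by auto
  have "\<forall>t. \<bar>t\<bar> \<le> real n \<longrightarrow> inS basic_gates (Yg p q t)" for n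
  proof (induction n)
    case 0
    then show ?case using Eg_one inS_one by (simp add: Yg_def)
  next
    case (Suc n)
    show ?case
    proof (intro allI impI)
      fix t :: real assume t: "\<bar>t\<bar> \<le> real (Suc n)"
      show "inS basic_gates (Yg p q t)"
      proof (cases "\<bar>t\<bar> \<le> 1")
        case True then show ?thesis using Y_basic[OF P] inS_gate by blast
      next
        case False
        show ?thesis
        proof (cases "t > 0")
          case True
          have "Yg p q t = Yg p q 1 ** Yg p q (t - 1)" using Y_add[OF pq] by simp
          moreover have "inS basic_gates (Yg p q (t - 1))" using Suc.IH t False True by auto
          ultimately show ?thesis using Y_basic[OF P, of 1] inS_gate inS_mult by auto
        next
          case F2: False
          have "Yg p q t = Yg p q (-1) ** Yg p q (t + 1)" using Y_add[OF pq] by simp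
          moreover have "inS basic_gates (Yg p q (t + 1))" using Suc.IH t False F2 by auto
          ultimately show ?thesis using Y_basic[OF P, of "-1"] inS_gate inS_mult by auto
        qed
      qed
    qed
  qed
  moreover obtain n where "\<bar>t\<bar> \<le> real n" using real_arch_simple by blast
  ultimately show ?thesis by blast
qed

lemma X_all:
  assumes P: "(p,q) \<in> {(0,2),(1,3)}"
  shows "inS basic_gates (Xg p q t)"
proof -
  have pq: "p \<noteq> q" using P by auto
  have "\<forall>t. \<bar>t\<bar> \<le> real n \<longrightarrow> inS basic_gates (Xg p q t)" for n
  proof (induction n)
    case 0
    then show ?case using Eg_one inS_one by (simp add: Xg_def)
  next
    case (Suc n)
    show ?case
    proof (intro allI impI)
      fix t :: real assume t: "\<bar>t\<bar> \<le> real (Suc n)"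
      show "inS basic_gates (Xg p q t)"
      proof (cases "\<bar>t\<bar> \<le> 1")
        case True then show ?thesis using X_basic[OF P] inS_gate by blast
      next
        case False
        show ?thesis
        proof (cases "t > 0")
          case True
          have "Xg p q t = Xg p q 1 ** Xg p q (t - 1)" using X_add[OF pq] by simp
          moreover have "inS basic_gates (Xg p q (t - 1))" using Suc.IH t False True by auto
          ultimately show ?thesis using X_basic[OF P, of 1] inS_gate inS_mult by auto
        next
          case F2: False
          have "Xg p q t = Xg p q (-1) ** Xg p q (t + 1)" using X_add[OF pq] by simp
          moreover have "inS basic_gates (Xg p q (t + 1))" using Suc.IH t False F2 by auto
          ultimately show ?thesis using X_basic[OF P, of "-1"] inS_gate inS_mult by auto
        qed
      qed
    qed
  qed
  moreover obtain n where "\<bar>t\<bar> \<le> real n" using real_arch_simple by blast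
  ultimately show ?thesis by blast
qed

(* ---- P5 ---- *)
lemma D_formula:
  assumes pq: "p \<noteq> q" and rr: "r * r = (1/2::real)"
  shows "(Eg p q (of_real r) (- of_real r) ** Eg p q (of_real (cos u)) (\<i> * of_real (sin u)))
          ** Eg p q (of_real r) (of_real r) = Eg p q (cis u) 0"
proof -
  have rr2: "r * (r * x) = x / 2" for x using rr by (metis mult.assoc mult.commute times_divide_eq_right mult_1)
  show ?thesis unfolding Eg_mult[OF pq]
    by (intro arg_cong2[where f="Eg p q"]) (simp_all add: complex_eq_iff algebra_simps rr rr2)
qed

lemma D_in:
  assumes P: "(p,q) \<in> {(0,2),(1,3)}"
  shows "inS basic_gates (Eg p q (cis u) 0)"
proof -
  have pq: "p \<noteq> q" using P by auto
  define r where "r = sqrt 2 / 2"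
  have rr: "r * r = (1/2::real)" by (simp add: r_def)
  have y1: "Yg p q (pi/4) = Eg p q (of_real r) (- of_real r)" by (simp add: Yg_def cos_45 sin_45 r_def)
  have y2: "Yg p q (-(pi/4)) = Eg p q (of_real r) (of_real r)" by (simp add: Yg_def cos_45 sin_45 r_def)
  have x1: "Xg p q (-u) = Eg p q (of_real (cos u)) (\<i> * of_real (sin u))" by (simp add: Xg_def)
  have "inS basic_gates ((Yg p q (pi/4) ** Xg p q (-u)) ** Yg p q (-(pi/4)))"
    using Y_all[OF P] X_all[OF P] inS_mult by blast
  then show ?thesis unfolding y1 y2 x1 D_formula[OF pq rr] .
qed

lemma SU2_in:
  assumes P: "(p,q) \<in> {(0,2),(1,3)}" and n: "cmod a ^ 2 + cmod b ^ 2 = 1"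
  shows "inS basic_gates (Eg p q a b)"
proof -
  have pq: "p \<noteq> q" using P by auto
  obtain be where be: "cmod a = cos be" "- cmod b = sin be"
    using sincos_total_2pi[of "cmod a" "- cmod b"] n by auto
  define u where "u = (Arg a - Arg b) / 2"
  define v where "v = (Arg a + Arg b) / 2"
  have uv: "u + v = Arg a" "v - u = Arg b" by (simp_all add: u_def v_def field_simps)
  have s1: "Eg p q (cis u) 0 ** Yg p q be = Eg p q (cis u * of_real (cos be)) (- (cis (-u) * of_real (sin be)))"
    unfolding Yg_def Eg_mult[OF pq]
    by (intro arg_cong2[where f="Eg p q"]) (simp_all add: cis_cnj algebra_simps)
  have s2: "Eg p q (cis u * of_real (cos be)) (- (cis (-u) * of_real (sin be))) ** Eg p q (cis v) 0
      = Eg p q (of_real (cos be) * cis (u + v)) (- (of_real (sin be) * cis (v - u)))"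
    unfolding Eg_mult[OF pq]
    by (intro arg_cong2[where f="Eg p q"])
       (simp_all add: complex_eq_iff cos_add sin_add cos_diff sin_diff algebra_simps)
  have s3: "Eg p q (of_real (cos be) * cis (u + v)) (- (of_real (sin be) * cis (v - u))) = Eg p q a b"
  proof -
    have "of_real (cos be) * cis (u + v) = a"
      unfolding uv be(1)[symmetric] by (metis rcis_cmod_Arg rcis_def)
    moreover have "- (of_real (sin be) * cis (v - u)) = b"
    proof -
      have "- (of_real (sin be) * cis (v - u)) = of_real (cmod b) * cis (Arg b)"
        unfolding uv be(2)[symmetric] by simp
      then show ?thesis by (metis rcis_cmod_Arg rcis_def)
    qed
    ultimately show ?thesis by simp
  qed
  have "inS basic_gates ((Eg p q (cis u) 0 ** Yg p q be) ** Eg p q (cis v) 0)"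
    using D_in[OF P] Y_all[OF P] inS_mult by blast
  then show ?thesis unfolding s1 s2 s3 .
qed

lemma SS: "SWAP ** SWAP = mat 1"
  by (simp add: vec_eq_iff all4 sum4 matrix_matrix_mult_def SWAP_def ket_bra_def mat_def)

lemma SS2: "X ** SWAP ** SWAP = X"
  by (metis matrix_mul_assoc SS matrix_mul_rid)

lemma swap02: "SWAP ** Eg 0 2 a b ** SWAP = Eg 0 1 a b"
  by (simp add: vec_eq_iff all4 sum4 matrix_matrix_mult_def SWAP_def ket_bra_def Eg_def)
lemma swap13: "SWAP ** Eg 1 3 a b ** SWAP = Eg 2 3 a b"
  by (simp add: vec_eq_iff all4 sum4 matrix_matrix_mult_def SWAP_def ket_bra_def Eg_def)

lemma swap_fold: "SWAP ** foldr (**) gs (mat 1) ** SWAP = foldr (**) (map (\<lambda>G. SWAP ** G ** SWAP) gs) (mat 1)"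
proof (induction gs)
  case Nil then show ?case by (simp add: SS)
next
  case (Cons g gs)
  have "SWAP ** (g ** foldr (**) gs (mat 1)) ** SWAP = (SWAP ** g ** SWAP) ** (SWAP ** foldr (**) gs (mat 1) ** SWAP)"
    by (simp add: matrix_mul_assoc SS2)
  then show ?case using Cons by simp
qed

lemma inS_swap: "inS basic_gates A \<Longrightarrow> inS gate_set (SWAP ** A ** SWAP)"
proof -
  assume "inS basic_gates A"
  then obtain gs where gs: "set gs \<subseteq> basic_gates" "A = foldr (**) gs (mat 1)" unfolding inS_def by blast
  have "set (map (\<lambda>G. SWAP ** G ** SWAP) gs) \<subseteq> gate_set" using gs(1) unfolding gate_set_def by auto
  then show ?thesis unfolding inS_def gs(2) swap_fold by blast
qed

lemma inS_basic_gate: "inS basic_gates A \<Longrightarrow> inS gate_set A"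
  by (rule inS_mono[of basic_gates]) (auto simp: gate_set_def)

definition planes :: "(4 \<times> 4) set" where
  "planes = {(0,1),(1,0),(0,2),(2,0),(1,3),(3,1),(2,3),(3,2)}"

lemma plane_G:
  assumes P: "(p,q) \<in> planes" and n: "cmod a ^ 2 + cmod b ^ 2 = 1"
  shows "inS gate_set (Eg p q a b)"
proof -
  have n': "cmod (cnj a) ^ 2 + cmod (- cnj b) ^ 2 = 1" using n by simp
  have g02: "inS gate_set (Eg 0 2 a b)" if "cmod a ^ 2 + cmod b ^ 2 = 1" for a b
    using inS_basic_gate SU2_in[of 0 2] that by simp
  have g13: "inS gate_set (Eg 1 3 a b)" if "cmod a ^ 2 + cmod b ^ 2 = 1" for a b
    using inS_basic_gate SU2_in[of 1 3] that by simp
  have g01: "inS gate_set (Eg 0 1 a b)" if "cmod a ^ 2 + cmod b ^ 2 = 1" for a b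
    using inS_swap[OF SU2_in[of 0 2 a b]] that swap02 by simp
  have g23: "inS gate_set (Eg 2 3 a b)" if "cmod a ^ 2 + cmod b ^ 2 = 1" for a b
    using inS_swap[OF SU2_in[of 1 3 a b]] that swap13 by simp
  consider "(p,q) = (0,1)" | "(p,q) = (1,0)" | "(p,q) = (0,2)" | "(p,q) = (2,0)"
    | "(p,q) = (1,3)" | "(p,q) = (3,1)" | "(p,q) = (2,3)" | "(p,q) = (3,2)"
    using P unfolding planes_def by blast
  then show ?thesis
  proof cases
    case 1 then show ?thesis using g01 n by simp
  next
    case 2 then show ?thesis using g01[OF n'] Eg_swap[of 0 1 a b] by simp
  next
    case 3 then show ?thesis using g02 n by simp
  next
    case 4 then show ?thesis using g02[OF n'] Eg_swap[of 0 2 a b] by simp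
  next
    case 5 then show ?thesis using g13 n by simp
  next
    case 6 then show ?thesis using g13[OF n'] Eg_swap[of 1 3 a b] by simp
  next
    case 7 then show ?thesis using g23 n by simp
  next
    case 8 then show ?thesis using g23[OF n'] Eg_swap[of 2 3 a b] by simp
  qed
qed

(* ---- P6 ---- *)
lemma elim:
  assumes pq: "p \<noteq> q"
  shows "\<exists>a b. cmod a ^ 2 + cmod b ^ 2 = 1 \<and> (A ** Eg p q a b)$i$q = 0 \<and>
           (\<exists>r\<ge>0. (A ** Eg p q a b)$i$p = of_real r)"
proof -
  define x where "x = A$i$p"
  define y where "y = A$i$q"
  define r where "r = sqrt (cmod x ^ 2 + cmod y ^ 2)"
  have r0: "r \<ge> 0" by (simp add: r_def)
  have rsq: "r ^ 2 = cmod x ^ 2 + cmod y ^ 2" by (simp add: r_def)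
  show ?thesis
  proof (cases "r = 0")
    case True
    then have "cmod x ^ 2 + cmod y ^ 2 = 0" using rsq by simp
    then have xy: "x = 0" "y = 0"
      by (simp_all add: sum_power2_eq_zero_iff)
    show ?thesis
      by (rule exI[of _ 1], rule exI[of _ 0]) (use xy pq in \<open>simp add: mult_Eg x_def y_def\<close>)
  next
    case False
    then have rp: "r > 0" using r0 by simp
    define a where "a = cnj x / of_real r"
    define b where "b = cnj y / of_real r"
    have xx: "x * cnj x = of_real (cmod x ^ 2)" "y * cnj y = of_real (cmod y ^ 2)"
      by (simp_all only: complex_norm_square)
    have n: "cmod a ^ 2 + cmod b ^ 2 = 1"
    proof -
      have "cmod a ^ 2 + cmod b ^ 2 = (cmod x ^ 2 + cmod y ^ 2) / r ^ 2"
        using rp by (simp add: a_def b_def norm_divide power_divide add_divide_distrib)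
      also have "\<dots> = r ^ 2 / r ^ 2" by (simp only: rsq)
      also have "\<dots> = 1" using rp by simp
      finally show ?thesis .
    qed
    have e1: "(A ** Eg p q a b)$i$q = 0"
      using pq rp by (simp add: mult_Eg a_def b_def x_def[symmetric] y_def[symmetric] algebra_simps)
    have "(A ** Eg p q a b)$i$p = (x * cnj x + y * cnj y) / of_real r"
      using pq rp by (simp add: mult_Eg a_def b_def x_def[symmetric] y_def[symmetric] add_divide_distrib)
    also have "\<dots> = of_real (r ^ 2) / of_real r" unfolding xx rsq by simp
    also have "\<dots> = of_real r" using rp by (simp add: power2_eq_square)
    finally have e2: "(A ** Eg p q a b)$i$p = of_real r" .
    show ?thesis using n e1 e2 r0 by blast
  qed
qed

definition Uni :: "cmat4 \<Rightarrow> bool" where "Uni B \<longleftrightarrow> B ** conj_transpose B = mat 1"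

lemma planes_neq: "(p,q) \<in> planes \<Longrightarrow> p \<noteq> q" by (auto simp: planes_def)

lemma step:
  assumes P: "(p,q) \<in> planes" and U: "Uni B"
  shows "\<exists>B'. Uni B' \<and> det B' = det B \<and> (inS gate_set B' \<longrightarrow> inS gate_set B) \<and> B'$i$q = 0 \<and>
     (\<exists>r\<ge>0. B'$i$p = of_real r) \<and> (\<forall>k j. j \<noteq> p \<and> j \<noteq> q \<longrightarrow> B'$k$j = B$k$j) \<and>
     (\<forall>k. B$k$p = 0 \<and> B$k$q = 0 \<longrightarrow> B'$k$p = 0 \<and> B'$k$q = 0)"
proof -
  have pq: "p \<noteq> q" by (rule planes_neq[OF P])
  obtain a b where n: "cmod a ^ 2 + cmod b ^ 2 = 1" and z: "(B ** Eg p q a b)$i$q = 0"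
    and r: "\<exists>r\<ge>0. (B ** Eg p q a b)$i$p = of_real r"
    using elim[OF pq] by blast
  define E where "E = Eg p q a b"
  define F where "F = Eg p q (cnj a) (-b)"
  have EF: "E ** F = mat 1" unfolding E_def F_def by (rule Eg_inv[OF pq n])
  have cE: "conj_transpose E = F" unfolding E_def F_def by (rule ct_Eg)
  have n': "cmod (cnj a) ^ 2 + cmod (- b) ^ 2 = 1" using n by simp
  have Fin: "inS gate_set F" unfolding F_def by (rule plane_G[OF P n'])
  have "Uni (B ** E)"
  proof -
    have "(B ** E) ** conj_transpose (B ** E) = B ** (E ** conj_transpose E) ** conj_transpose B"
      by (simp add: ct_mult matrix_mul_assoc)
    then show ?thesis using U EF cE by (simp add: Uni_def)
  qed
  moreover have "det (B ** E) = det B" using det_Eg[OF pq n] by (simp add: det_mul E_def)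
  moreover have "inS gate_set (B ** E) \<longrightarrow> inS gate_set B"
  proof
    assume "inS gate_set (B ** E)"
    then have "inS gate_set ((B ** E) ** F)" using Fin inS_mult by blast
    moreover have "(B ** E) ** F = B" by (simp add: matrix_mul_assoc[symmetric] EF)
    ultimately show "inS gate_set B" by simp
  qed
  moreover have "(\<forall>k j. j \<noteq> p \<and> j \<noteq> q \<longrightarrow> (B ** E)$k$j = B$k$j)"
    by (simp add: E_def mult_Eg[OF pq])
  moreover have "(\<forall>k. B$k$p = 0 \<and> B$k$q = 0 \<longrightarrow> (B ** E)$k$p = 0 \<and> (B ** E)$k$q = 0)"
    using pq by (simp add: E_def mult_Eg[OF pq])
  ultimately show ?thesis using z r unfolding E_def by blast
qed

lemma uni:
  assumes "Uni B"
  shows "B$i$0 * cnj (B$j$0) + B$i$1 * cnj (B$j$1) + B$i$2 * cnj (B$j$2) + B$i$3 * cnj (B$j$3)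
         = (if i = j then 1 else 0)"
proof -
  have "(B ** conj_transpose B)$i$j = mat 1 $ i $ j" using assms by (simp add: Uni_def)
  then show ?thesis by (simp add: matrix_matrix_mult_def conj_transpose_def sum4 mat_def)
qed

lemma rone: "r \<ge> 0 \<Longrightarrow> complex_of_real r * cnj (complex_of_real r) = 1 \<Longrightarrow> r = 1"
proof -
  assume r: "r \<ge> 0" "complex_of_real r * cnj (complex_of_real r) = 1"
  then have "complex_of_real (r * r) = 1" by simp
  then have "r * r = 1" using of_real_eq_1_iff by blast
  then have "(r - 1) * (r + 1) = 0" by (simp add: algebra_simps)
  then show "r = 1" using r(1) by simp
qed

(* ---- P7 ---- *)
lemma SU4_in:
  assumes A: "A \<in> SU4"
  shows "inS gate_set A"
proof -
  have U0: "Uni A" and d0: "det A = 1" using A by (auto simp: SU4_def Uni_def)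
  have P: "(2,3) \<in> planes" "(0,2) \<in> planes" "(0,1) \<in> planes" "(3,2) \<in> planes" "(1,3) \<in> planes"
    by (simp_all add: planes_def)
  obtain B1 where B1: "Uni B1" "det B1 = det A" "inS gate_set B1 \<longrightarrow> inS gate_set A" "B1$0$3 = 0"
    "\<forall>k j. j \<noteq> 2 \<and> j \<noteq> 3 \<longrightarrow> B1$k$j = A$k$j"
    by (rule exE[OF step[OF P(1) U0, of 0]], elim exE conjE, rule that, assumption+)
  obtain B2 where B2: "Uni B2" "det B2 = det B1" "inS gate_set B2 \<longrightarrow> inS gate_set B1" "B2$0$2 = 0"
    "\<forall>k j. j \<noteq> 0 \<and> j \<noteq> 2 \<longrightarrow> B2$k$j = B1$k$j"
    by (rule exE[OF step[OF P(2) B1(1), of 0]], elim exE conjE, rule that, assumption+)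
  obtain B3 r3 where B3: "Uni B3" "det B3 = det B2" "inS gate_set B3 \<longrightarrow> inS gate_set B2" "B3$0$1 = 0"
    "r3 \<ge> 0" "B3$0$0 = of_real r3"
    "\<forall>k j. j \<noteq> 0 \<and> j \<noteq> 1 \<longrightarrow> B3$k$j = B2$k$j"
    by (rule exE[OF step[OF P(3) B2(1), of 0]], elim exE conjE, rule that, assumption+)
  have b302: "B3$0$2 = 0" using B3(7) B2(4) by simp
  have b303: "B3$0$3 = 0" using B3(7) B2(5) B1(4) by simp
  have "r3 = 1"
    using uni[OF B3(1), of 0 0] B3(4,5,6) b302 b303 rone by simp
  then have b300: "B3$0$0 = 1" using B3(6) by simp
  have b3k0: "B3$k$0 = 0" if "k \<noteq> 0" for k
    using uni[OF B3(1), of k 0] that b300 B3(4) b302 b303 by simp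
  obtain B4 where B4: "Uni B4" "det B4 = det B3" "inS gate_set B4 \<longrightarrow> inS gate_set B3" "B4$1$2 = 0"
    "\<forall>k j. j \<noteq> 3 \<and> j \<noteq> 2 \<longrightarrow> B4$k$j = B3$k$j"
    "\<forall>k. B3$k$3 = 0 \<and> B3$k$2 = 0 \<longrightarrow> B4$k$3 = 0 \<and> B4$k$2 = 0"
    by (rule exE[OF step[OF P(4) B3(1), of 1]], elim exE conjE, rule that, assumption+)
  have b40: "B4$0$3 = 0" "B4$0$2 = 0" using B4(6) b302 b303 by auto
  obtain B5 r5 where B5: "Uni B5" "det B5 = det B4" "inS gate_set B5 \<longrightarrow> inS gate_set B4" "B5$1$3 = 0"
    "r5 \<ge> 0" "B5$1$1 = of_real r5"
    "\<forall>k j. j \<noteq> 1 \<and> j \<noteq> 3 \<longrightarrow> B5$k$j = B4$k$j"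
    "\<forall>k. B4$k$1 = 0 \<and> B4$k$3 = 0 \<longrightarrow> B5$k$1 = 0 \<and> B5$k$3 = 0"
    by (rule exE[OF step[OF P(5) B4(1), of 1]], elim exE conjE, rule that, assumption+)
  have b5c0: "B5$k$0 = B3$k$0" for k using B5(7) B4(5) by simp
  have b500: "B5$0$0 = 1" using b5c0 b300 by simp
  have b5k0: "B5$k$0 = 0" if "k \<noteq> 0" for k using b5c0 b3k0 that by simp
  have b502: "B5$0$2 = 0" using B5(7) b40 by simp
  have b512: "B5$1$2 = 0" using B5(7) B4(4) by simp
  have b50: "B5$0$1 = 0" "B5$0$3 = 0"
  proof -
    have "B4$0$1 = 0" using B4(5) B3(4) by simp
    then show "B5$0$1 = 0" "B5$0$3 = 0" using B5(8) b40 by auto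
  qed
  have "r5 = 1"
    using uni[OF B5(1), of 1 1] b5k0[of 1] B5(4,5,6) b512 rone by simp
  then have b511: "B5$1$1 = 1" using B5(6) by simp
  have b5k1: "B5$k$1 = 0" if "k \<noteq> 0" "k \<noteq> 1" for k
    using uni[OF B5(1), of k 1] that b5k0 b511 B5(4) b512 by simp
  obtain B6 r6 where B6: "Uni B6" "det B6 = det B5" "inS gate_set B6 \<longrightarrow> inS gate_set B5" "B6$2$3 = 0"
    "r6 \<ge> 0" "B6$2$2 = of_real r6"
    "\<forall>k j. j \<noteq> 2 \<and> j \<noteq> 3 \<longrightarrow> B6$k$j = B5$k$j"
    "\<forall>k. B5$k$2 = 0 \<and> B5$k$3 = 0 \<longrightarrow> B6$k$2 = 0 \<and> B6$k$3 = 0"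
    by (rule exE[OF step[OF P(1) B5(1), of 2]], elim exE conjE, rule that, assumption+)
  have c0: "B6$k$0 = B5$k$0" for k using B6(7) by simp
  have c1: "B6$k$1 = B5$k$1" for k using B6(7) by simp
  have r0: "B6$0$2 = 0" "B6$0$3 = 0" using B6(8) b502 b50 by auto
  have r1: "B6$1$2 = 0" "B6$1$3 = 0" using B6(8) b512 B5(4) by auto
  have "r6 = 1"
    using uni[OF B6(1), of 2 2] c0 c1 b5k0[of 2] b5k1[of 2] B6(4,5,6) rone by simp
  then have b622: "B6$2$2 = 1" using B6(6) by simp
  have b632: "B6$3$2 = 0"
    using uni[OF B6(1), of 3 2] c0 c1 b5k0 b5k1 B6(4) b622 by simp
  have offd: "B6$i$j = 0" if "i \<noteq> j" for i j
  proof -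
    have "B6$i$j = 0" if "i \<noteq> j" "i \<in> {0,1,2,3}" "j \<in> {0,1,2,3}" for i j
      using that c0 c1 b5k0 b5k1 b500 b511 r0 r1 B6(4) b632 b50 B5(4) by auto
    moreover have "i \<in> {0,1,2,3}" "j \<in> {0,1,2,3}" using UNIV4 by auto
    ultimately show ?thesis using that by blast
  qed
  have "det B6 = 1" using B6(2) B5(2) B4(2) B3(2) B2(2) B1(2) d0 by simp
  moreover have "det B6 = B6$3$3"
  proof -
    have dg: "(\<lambda>i. B6$i$i) = (\<lambda>i. if i = 3 then B6$3$3 else 1)"
    proof (rule ext)
      fix i :: 4
      have "i \<in> {0,1,2,3}" using UNIV4 by auto
      then show "B6$i$i = (if i = 3 then B6$3$3 else 1)"
        using c0 c1 b500 b511 b622 by auto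
    qed
    have "det B6 = prod (\<lambda>i. B6$i$i) UNIV" using det_diagonal[of B6] offd by blast
    then show ?thesis unfolding dg by simp
  qed
  ultimately have b633: "B6$3$3 = 1" by simp
  have "B6 = mat 1"
  proof (rule mat_eqI)
    fix i j
    show "B6$i$j = mat 1 $ i $ j"
    proof (cases "i = j")
      case True
      have "i \<in> {0,1,2,3}" using UNIV4 by auto
      then show ?thesis using True c0 c1 b500 b511 b622 b633 by (auto simp: mat_def)
    next
      case False then show ?thesis using offd by (simp add: mat_def)
    qed
  qed
  then have "inS gate_set B6" using inS_one by simp
  then show ?thesis using B6(3) B5(3) B4(3) B3(3) B2(3) B1(3) by blast
qed

theorem part2: "\<forall>A \<in> SU4. \<exists>gs. set gs \<subseteq> gate_set \<and> A = foldr (**) gs (mat 1)"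
  using SU4_in unfolding inS_def by blast

theorem mainTheorem7:
  shows "real_lie_gen {gU, gY, gT, gX, gV, gZ} = su4
         \<and> (\<forall>A \<in> SU4. \<exists>gs. set gs \<subseteq> gate_set \<and> A = foldr (**) gs (mat 1))"
  using part1 part2 by blast

end
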